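(* Let $(X,C)$ be a separable convexity space and let $B$ be the family of its half-spaces. If the Radon number of $(X,C)$ is $r$, then the VC dimension of $B$ and the Helly number of $B$ are both less than $r$.
   Context: A convexity space is a pair $(X,C)$ with $C\subseteq 2^X$ such that $\emptyset, X\in C$ and $C$ is closed under arbitrary intersections. The convex hull $conv(Y)$ is the intersection of all $c\in C$ containing $Y$. A half-space is a $b\in C$ with $X\setminus b\in C$. $(X,C)$ is separable if for every $c\in C$ and $x\in X\setminus c$ there is a half-space $b$ with $c\subseteq b$, $x\notin b$. $C$ Radon-shatters $Y$ if for every partition $Y=Y_1\sqcup Y_2$, $conv(Y_1)\cap conv(Y_2)=\emptyset$; the Radon number is the minimum $r$ such that no set of size $r$ is Radon-shattered. The Helly number of a family $B$ is the minimum $h$ such that every finite $B'\subseteq B$ with $\bigcap B'=\emptyset$ contains a subfamily of at most $h$ sets with empty intersection. The VC dimension of $B\subseteq 2^X$ is the supremum of $v$ such that some $Y\subseteq X$ with $|Y|=v$ satisfies: for every $Z\subseteq Y$ there is $b\in B$ with $b\cap Y=Z$. *)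

theory Defs
  imports Main "HOL-Library.Extended_Nat"
begin

definition convexity_space :: "'a set \<Rightarrow> 'a set set \<Rightarrow> bool" where
  "convexity_space X C \<longleftrightarrow> C \<subseteq> Pow X \<and> {} \<in> C \<and> X \<in> C \<and>
     (\<forall>S. S \<subseteq> C \<longrightarrow> X \<inter> \<Inter>S \<in> C)"

definition conv :: "'a set \<Rightarrow> 'a set set \<Rightarrow> 'a set \<Rightarrow> 'a set" where
  "conv X C Y = X \<inter> \<Inter>{c \<in> C. Y \<subseteq> c}"

definition half_spaces :: "'a set \<Rightarrow> 'a set set \<Rightarrow> 'a set set" where
  "half_spaces X C = {b \<in> C. X - b \<in> C}"

definition separable :: "'a set \<Rightarrow> 'a set set \<Rightarrow> bool" where
  "separable X C \<longleftrightarrow>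
     (\<forall>c\<in>C. \<forall>x\<in>X - c. \<exists>b\<in>half_spaces X C. c \<subseteq> b \<and> x \<notin> b)"

definition radon_shatters :: "'a set \<Rightarrow> 'a set set \<Rightarrow> 'a set \<Rightarrow> bool" where
  "radon_shatters X C Y \<longleftrightarrow>
     (\<forall>Y1 Y2. Y1 \<inter> Y2 = {} \<and> Y1 \<union> Y2 = Y \<longrightarrow> conv X C Y1 \<inter> conv X C Y2 = {})"

definition radon_number :: "'a set \<Rightarrow> 'a set set \<Rightarrow> enat" where
  "radon_number X C =
    (let P = (\<lambda>r::nat. \<forall>Y. Y \<subseteq> X \<and> finite Y \<and> card Y = r \<longrightarrow> \<not> radon_shatters X C Y)
     in if \<exists>r. P r then enat (LEAST r. P r) else \<infinity>)"

text \<open>Helly number of a family B of subsets of the ground set X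
  (intersections are taken inside X, so the empty subfamily has intersection X).\<close>
definition helly_number :: "'a set \<Rightarrow> 'a set set \<Rightarrow> enat" where
  "helly_number X B =
    (let P = (\<lambda>h::nat. \<forall>B'. B' \<subseteq> B \<and> finite B' \<and> X \<inter> \<Inter>B' = {} \<longrightarrow>
                 (\<exists>B''\<subseteq>B'. card B'' \<le> h \<and> X \<inter> \<Inter>B'' = {}))
     in if \<exists>h. P h then enat (LEAST h. P h) else \<infinity>)"

definition vc_shatters :: "'a set set \<Rightarrow> 'a set \<Rightarrow> bool" where
  "vc_shatters B Y \<longleftrightarrow> (\<forall>Z\<subseteq>Y. \<exists>b\<in>B. b \<inter> Y = Z)"

definition vc_dim :: "'a set \<Rightarrow> 'a set set \<Rightarrow> enat" where
  "vc_dim X B = Sup {enat (card Y) | Y. Y \<subseteq> X \<and> finite Y \<and> vc_shatters B Y}"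

end

theory Submission
  imports Defs
begin

lemma conv_mono: "Y \<subseteq> Z \<Longrightarrow> conv X C Y \<subseteq> conv X C Z"
  unfolding conv_def by blast

lemma conv_sub: "c \<in> C \<Longrightarrow> Y \<subseteq> c \<Longrightarrow> conv X C Y \<subseteq> X \<inter> c"
  unfolding conv_def by blast

lemma rs_subset:
  assumes "radon_shatters X C Y" "Y' \<subseteq> Y"
  shows "radon_shatters X C Y'"
  unfolding radon_shatters_def
proof (intro allI impI)
  fix Y1 Y2 assume h: "Y1 \<inter> Y2 = {} \<and> Y1 \<union> Y2 = Y'"
  have "Y1 \<inter> (Y2 \<union> (Y - Y')) = {} \<and> Y1 \<union> (Y2 \<union> (Y - Y')) = Y" using h assms(2) by blast
  then have "conv X C Y1 \<inter> conv X C (Y2 \<union> (Y - Y')) = {}"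
    using assms(1) unfolding radon_shatters_def by blast
  moreover have "conv X C Y2 \<subseteq> conv X C (Y2 \<union> (Y - Y'))" by (rule conv_mono) blast
  ultimately show "conv X C Y1 \<inter> conv X C Y2 = {}" by blast
qed

lemma radon_facts:
  assumes cs: "convexity_space X C" and rn: "radon_number X C = enat r"
  shows "r \<ge> 1" and "\<And>Y. Y \<subseteq> X \<Longrightarrow> finite Y \<Longrightarrow> card Y \<ge> r \<Longrightarrow> \<not> radon_shatters X C Y"
proof -
  define P where "P = (\<lambda>r::nat. \<forall>Y. Y \<subseteq> X \<and> finite Y \<and> card Y = r \<longrightarrow> \<not> radon_shatters X C Y)"
  have ex: "\<exists>r. P r" and rl: "r = (LEAST r. P r)"
    using rn unfolding radon_number_def P_def Let_def by (auto split: if_splits)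
  have Pr: "P r" using ex rl by (metis LeastI_ex)
  have e: "{} \<in> C" using cs by (simp add: convexity_space_def)
  have "conv X C {} = {}" using e unfolding conv_def by auto
  then have "radon_shatters X C {}" unfolding radon_shatters_def by auto
  then have "\<not> P 0" unfolding P_def
    by (metis empty_subsetI finite.emptyI card.empty)
  then show "r \<ge> 1" using Pr by (cases r) auto
  fix Y assume "Y \<subseteq> X" "finite Y" "card Y \<ge> r"
  show "\<not> radon_shatters X C Y"
  proof
    assume rs: "radon_shatters X C Y"
    obtain Y' where "Y' \<subseteq> Y" "card Y' = r" using obtain_subset_with_card_n[OF \<open>card Y \<ge> r\<close>] by blast
    moreover have "finite Y'" using \<open>Y' \<subseteq> Y\<close> \<open>finite Y\<close> finite_subset by blast
    moreover have "radon_shatters X C Y'" using rs_subset[OF rs \<open>Y' \<subseteq> Y\<close>] .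
    moreover have "Y' \<subseteq> X" using \<open>Y' \<subseteq> Y\<close> \<open>Y \<subseteq> X\<close> by blast
    ultimately show False using Pr unfolding P_def by auto
  qed
qed


lemma vc_part:
  assumes cs: "convexity_space X C" and rn: "radon_number X C = enat r"
  shows "vc_dim X (half_spaces X C) < enat r"
proof -
  have r1: "r \<ge> 1" using radon_facts[OF cs rn] by blast
  have "Sup {enat (card Y) | Y. Y \<subseteq> X \<and> finite Y \<and> vc_shatters (half_spaces X C) Y} \<le> enat (r - 1)"
  proof (rule Sup_least)
    fix e assume "e \<in> {enat (card Y) | Y. Y \<subseteq> X \<and> finite Y \<and> vc_shatters (half_spaces X C) Y}"
    then obtain Y where e: "e = enat (card Y)" and Y: "Y \<subseteq> X" "finite Y"
      and vs: "vc_shatters (half_spaces X C) Y" by blast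
    have "radon_shatters X C Y"
      unfolding radon_shatters_def
    proof (intro allI impI)
      fix Y1 Y2 assume h: "Y1 \<inter> Y2 = {} \<and> Y1 \<union> Y2 = Y"
      have "Y1 \<subseteq> Y" using h by blast
      then obtain b where b1: "b \<in> half_spaces X C" and b2: "b \<inter> Y = Y1"
        using vs unfolding vc_shatters_def by blast
      have bC: "b \<in> C" and bC': "X - b \<in> C" using b1 unfolding half_spaces_def by auto
      have s1: "Y1 \<subseteq> b" using b2 by blast
      have s2: "Y2 \<subseteq> X - b" using b2 h Y(1) by blast
      have "conv X C Y1 \<subseteq> X \<inter> b" using conv_sub[OF bC s1] .
      moreover have "conv X C Y2 \<subseteq> X \<inter> (X - b)" using conv_sub[OF bC' s2] .
      ultimately show "conv X C Y1 \<inter> conv X C Y2 = {}" by blast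
    qed
    then have "\<not> card Y \<ge> r" using radon_facts(2)[OF cs rn Y] by blast
    then show "e \<le> enat (r - 1)" using e by simp
  qed
  moreover have "enat (r - 1) < enat r" using r1 by simp
  ultimately show ?thesis unfolding vc_dim_def by (rule order_le_less_trans)
qed

lemma helly_key:
  assumes cs: "convexity_space X C" and rn: "radon_number X C = enat r"
    and B'': "B'' \<subseteq> half_spaces X C" "finite B''" "X \<inter> \<Inter>B'' = {}"
    and mn: "\<And>B4. B4 \<subset> B'' \<Longrightarrow> X \<inter> \<Inter>B4 \<noteq> {}"
  shows "card B'' < r"
proof (rule ccontr)
  assume nc: "\<not> card B'' < r"
  have "\<forall>b\<in>B''. \<exists>y. y \<in> X \<inter> \<Inter>(B'' - {b})"
    using mn by blast
  then obtain x where x: "\<And>b. b \<in> B'' \<Longrightarrow> x b \<in> X \<inter> \<Inter>(B'' - {b})" by metis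
  have xn: "x b \<notin> b" if "b \<in> B''" for b
    using x[OF that] B''(3) that by blast
  have xi: "x b \<in> c" if "b \<in> B''" "c \<in> B''" "b \<noteq> c" for b c
    using x[OF that(1)] that by blast
  have inj: "inj_on x B''"
    by (rule inj_onI) (metis xn xi)
  define Y where "Y = x ` B''"
  have Yc: "card Y = card B''" unfolding Y_def using card_image[OF inj] .
  have YX: "Y \<subseteq> X" unfolding Y_def using x by blast
  have Yf: "finite Y" unfolding Y_def using B''(2) by simp
  have BC: "B'' \<subseteq> C" using B''(1) unfolding half_spaces_def by blast
  have "radon_shatters X C Y"
    unfolding radon_shatters_def
  proof (intro allI impI)
    fix Y1 Y2 assume h: "Y1 \<inter> Y2 = {} \<and> Y1 \<union> Y2 = Y"
    define I1 where "I1 = {b\<in>B''. x b \<in> Y1}"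
    define I2 where "I2 = {b\<in>B''. x b \<in> Y2}"
    have c1: "conv X C Y1 \<subseteq> c" if "c \<in> I2" for c
    proof -
      have "Y1 \<subseteq> c"
      proof
        fix y assume "y \<in> Y1"
        then obtain b where "b \<in> B''" "y = x b" using h unfolding Y_def by blast
        moreover have "b \<noteq> c" using that h \<open>y \<in> Y1\<close> calculation unfolding I2_def by blast
        ultimately show "y \<in> c" using xi that unfolding I2_def by blast
      qed
      then show ?thesis using conv_sub[of c C Y1 X] that BC unfolding I2_def by blast
    qed
    have c2: "conv X C Y2 \<subseteq> c" if "c \<in> I1" for c
    proof -
      have "Y2 \<subseteq> c"
      proof
        fix y assume "y \<in> Y2"
        then obtain b where "b \<in> B''" "y = x b" using h unfolding Y_def by blast
        moreover have "b \<noteq> c" using that h \<open>y \<in> Y2\<close> calculation unfolding I1_def by blast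
        ultimately show "y \<in> c" using xi that unfolding I1_def by blast
      qed
      then show ?thesis using conv_sub[of c C Y2 X] that BC unfolding I1_def by blast
    qed
    have U: "B'' = I1 \<union> I2" using h unfolding I1_def I2_def Y_def by blast
    have "conv X C Y1 \<subseteq> X" unfolding conv_def by blast
    then have "conv X C Y1 \<inter> conv X C Y2 \<subseteq> X \<inter> \<Inter>B''"
      using c1 c2 U by blast
    then show "conv X C Y1 \<inter> conv X C Y2 = {}" using B''(3) by blast
  qed
  moreover have "card Y \<ge> r" using nc Yc by simp
  ultimately show False using radon_facts(2)[OF cs rn YX Yf] by blast
qed

lemma helly_part:
  assumes cs: "convexity_space X C" and rn: "radon_number X C = enat r"
  shows "helly_number X (half_spaces X C) < enat r"
proof -
  have r1: "r \<ge> 1" using radon_facts[OF cs rn] by blast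
  define P where "P = (\<lambda>h::nat. \<forall>B'. B' \<subseteq> half_spaces X C \<and> finite B' \<and> X \<inter> \<Inter>B' = {} \<longrightarrow>
                 (\<exists>B''\<subseteq>B'. card B'' \<le> h \<and> X \<inter> \<Inter>B'' = {}))"
  have Pr: "P (r - 1)" unfolding P_def
  proof (intro allI impI)
    fix B' assume hB: "B' \<subseteq> half_spaces X C \<and> finite B' \<and> X \<inter> \<Inter>B' = {}"
    define Q where "Q = (\<lambda>n. \<exists>B3\<subseteq>B'. card B3 = n \<and> X \<inter> \<Inter>B3 = {})"
    have "Q (card B')" unfolding Q_def using hB by blast
    then have "Q (LEAST n. Q n)" by (rule LeastI)
    then obtain B3 where B3: "B3 \<subseteq> B'" "card B3 = (LEAST n. Q n)" "X \<inter> \<Inter>B3 = {}"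
      unfolding Q_def by blast
    have fin: "finite B3" using B3(1) hB finite_subset by blast
    have mn: "X \<inter> \<Inter>B4 \<noteq> {}" if "B4 \<subset> B3" for B4
    proof
      assume e: "X \<inter> \<Inter>B4 = {}"
      have "card B4 < card B3" using psubset_card_mono[OF fin that] .
      moreover have "Q (card B4)" unfolding Q_def using e that B3(1) by blast
      ultimately show False using B3(2) not_less_Least by metis
    qed
    have "card B3 < r"
      using helly_key[OF cs rn _ fin B3(3) mn] B3(1) hB by blast
    then show "\<exists>B''\<subseteq>B'. card B'' \<le> r - 1 \<and> X \<inter> \<Inter>B'' = {}" using B3 by auto
  qed
  then have "(LEAST h. P h) \<le> r - 1" by (rule Least_le)
  moreover have "\<exists>h. P h" using Pr by blast
  then have "helly_number X (half_spaces X C) = enat (LEAST h. P h)"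
    unfolding helly_number_def P_def Let_def by (simp only: if_True)
  ultimately show ?thesis using r1 by simp
qed

theorem lemma1:
  fixes X :: "'a set" and C :: "'a set set" and r :: nat
  assumes "convexity_space X C"
    and "separable X C"
    and "radon_number X C = enat r"
  shows "vc_dim X (half_spaces X C) < enat r \<and> helly_number X (half_spaces X C) < enat r"
  using vc_part[OF assms(1,3)] helly_part[OF assms(1,3)] by blast

end
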